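(* For every $\rho\ge0$, $x_0\in\mathcal X$, $\gamma\ge0$, the conditional ambiguity set $$\mathcal B_{x_0,\gamma}(\mathbb B^\infty_\rho)=\Big\{\mu_0\in\mathcal M(\mathcal Y):\exists\,\mathbb Q\in\mathbb B^\infty_\rho\text{ with }\mathbb Q(\mathcal N_\gamma(x_0)\times\mathcal Y)>0\text{ and }\mathbb Q(\mathcal N_\gamma(x_0)\times A)=\mu_0(A)\,\mathbb Q(\mathcal N_\gamma(x_0)\times\mathcal Y)\ \forall A\subseteq\mathcal Y\text{ measurable}\Big\}$$ is convex.
   Context: Continuous metrics $\mathbb D_{\mathcal X}$ on $\mathcal X\subseteq\mathbb R^n$ and $\mathbb D_{\mathcal Y}$ on $\mathcal Y\subseteq\mathbb R^m$, $\mathbb D=\mathbb D_{\mathcal X}+\mathbb D_{\mathcal Y}$; data $(\hat x_i,\hat y_i)\in\mathcal X\times\mathcal Y$, $\hat{\mathbb P}=\frac1N\sum_i\delta_{(\hat x_i,\hat y_i)}$; $\mathbb W_\infty(\mathbb Q_1,\mathbb Q_2)=\inf_{\pi\in\Pi(\mathbb Q_1,\mathbb Q_2)}\operatorname{ess\,sup}_\pi\mathbb D(\xi_1,\xi_2)$; $\mathbb B^\infty_\rho=\{\mathbb Q:\mathbb W_\infty(\mathbb Q,\hat{\mathbb P})\le\rho\}$; $\mathcal M(\mathcal Y)$ is the set of Borel probability measures on $\mathcal Y$; $\mathcal N_\gamma(x_0)=\{x\in\mathcal X:\mathbb D_{\mathcal X}(x,x_0)\le\gamma\}$. *)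

theory Defs
  imports "HOL-Probability.Probability"
begin

definition cont_metric_on :: "'a::euclidean_space set \<Rightarrow> ('a \<Rightarrow> 'a \<Rightarrow> real) \<Rightarrow> bool" where
  "cont_metric_on S d \<longleftrightarrow>
     (\<forall>x\<in>S. \<forall>y\<in>S. 0 \<le> d x y \<and> (d x y = 0 \<longleftrightarrow> x = y) \<and> d x y = d y x) \<and>
     (\<forall>x\<in>S. \<forall>y\<in>S. \<forall>z\<in>S. d x z \<le> d x y + d y z) \<and>
     continuous_on (S \<times> S) (\<lambda>(x, y). d x y)"

definition borel_probs :: "'a::topological_space set \<Rightarrow> 'a measure set" where
  "borel_probs S = {Q. prob_space Q \<and> sets Q = sets (restrict_space borel S)}"

definition sum_metric :: "('a \<Rightarrow> 'a \<Rightarrow> real) \<Rightarrow> ('b \<Rightarrow> 'b \<Rightarrow> real) \<Rightarrow> ('a \<times> 'b) \<Rightarrow> ('a \<times> 'b) \<Rightarrow> real" where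
  "sum_metric DX DY p q = DX (fst p) (fst q) + DY (snd p) (snd q)"

definition couplings :: "'a::topological_space set \<Rightarrow> 'a measure \<Rightarrow> 'a measure \<Rightarrow> ('a \<times> 'a) measure set" where
  "couplings S Q1 Q2 = {\<pi> \<in> borel_probs (S \<times> S).
       distr \<pi> (restrict_space borel S) fst = Q1 \<and> distr \<pi> (restrict_space borel S) snd = Q2}"

definition W_inf :: "'a::topological_space set \<Rightarrow> ('a \<Rightarrow> 'a \<Rightarrow> real) \<Rightarrow> 'a measure \<Rightarrow> 'a measure \<Rightarrow> ereal" where
  "W_inf S D Q1 Q2 = (INF \<pi> \<in> couplings S Q1 Q2. esssup \<pi> (\<lambda>z. ereal (D (fst z) (snd z))))"

definition empirical :: "'a::topological_space set \<Rightarrow> nat \<Rightarrow> (nat \<Rightarrow> 'a) \<Rightarrow> 'a measure" where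
  "empirical S N d = measure_of S (sets (restrict_space borel S))
      (\<lambda>A. ennreal (real (card {i. i < N \<and> d i \<in> A}) / real N))"

definition Winf_ball ::
  "'a::euclidean_space set \<Rightarrow> 'b::euclidean_space set \<Rightarrow> ('a \<Rightarrow> 'a \<Rightarrow> real) \<Rightarrow> ('b \<Rightarrow> 'b \<Rightarrow> real)
   \<Rightarrow> nat \<Rightarrow> (nat \<Rightarrow> 'a \<times> 'b) \<Rightarrow> real \<Rightarrow> ('a \<times> 'b) measure set" where
  "Winf_ball X Y DX DY N d \<rho> = {Q \<in> borel_probs (X \<times> Y).
      W_inf (X \<times> Y) (sum_metric DX DY) Q (empirical (X \<times> Y) N d) \<le> ereal \<rho>}"

definition nbhd :: "'a set \<Rightarrow> ('a \<Rightarrow> 'a \<Rightarrow> real) \<Rightarrow> real \<Rightarrow> 'a \<Rightarrow> 'a set" where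
  "nbhd X DX \<gamma> x0 = {x \<in> X. DX x x0 \<le> \<gamma>}"

definition cond_ambiguity ::
  "'a::euclidean_space set \<Rightarrow> 'b::euclidean_space set \<Rightarrow> ('a \<Rightarrow> 'a \<Rightarrow> real) \<Rightarrow> 'a \<Rightarrow> real
   \<Rightarrow> ('a \<times> 'b) measure set \<Rightarrow> 'b measure set" where
  "cond_ambiguity X Y DX x0 \<gamma> B = {\<mu>0 \<in> borel_probs Y. \<exists>Q \<in> B.
      measure Q (nbhd X DX \<gamma> x0 \<times> Y) > 0 \<and>
      (\<forall>A \<in> sets (restrict_space borel Y).
          measure Q (nbhd X DX \<gamma> x0 \<times> A) = measure \<mu>0 A * measure Q (nbhd X DX \<gamma> x0 \<times> Y))}"

definition mix_measure :: "'a::topological_space set \<Rightarrow> real \<Rightarrow> 'a measure \<Rightarrow> 'a measure \<Rightarrow> 'a measure" where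
  "mix_measure S t \<mu>1 \<mu>2 = measure_of S (sets (restrict_space borel S))
      (\<lambda>A. ennreal t * emeasure \<mu>1 A + ennreal (1 - t) * emeasure \<mu>2 A)"

definition convex_measure_set :: "'a::topological_space set \<Rightarrow> 'a measure set \<Rightarrow> bool" where
  "convex_measure_set S M \<longleftrightarrow>
     (\<forall>\<mu>1\<in>M. \<forall>\<mu>2\<in>M. \<forall>t::real. 0 \<le> t \<and> t \<le> 1 \<longrightarrow> mix_measure S t \<mu>1 \<mu>2 \<in> M)"

end

theory Submission
  imports Defs
begin

lemma mix_props:
  fixes S :: "'a::topological_space set"
  assumes m1: "\<mu>1 \<in> borel_probs S" and m2: "\<mu>2 \<in> borel_probs S" and t: "0 \<le> t" "t \<le> 1"
  shows "mix_measure S t \<mu>1 \<mu>2 \<in> borel_probs S"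
    and "\<And>A. A \<in> sets (restrict_space borel S) \<Longrightarrow>
           emeasure (mix_measure S t \<mu>1 \<mu>2) A = ennreal t * emeasure \<mu>1 A + ennreal (1 - t) * emeasure \<mu>2 A"
    and "\<And>A. measure (mix_measure S t \<mu>1 \<mu>2) A = t * measure \<mu>1 A + (1 - t) * measure \<mu>2 A"
proof -
  let ?M = "sets (restrict_space borel S)"
  let ?f = "\<lambda>A. ennreal t * emeasure \<mu>1 A + ennreal (1 - t) * emeasure \<mu>2 A"
  have s1: "sets \<mu>1 = ?M" and s2: "sets \<mu>2 = ?M" and p1: "prob_space \<mu>1" and p2: "prob_space \<mu>2"
    using m1 m2 by (auto simp: borel_probs_def)
  have sp1: "space \<mu>1 = S" using sets_eq_imp_space_eq[OF s1] by (simp add: space_restrict_space)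
  have sp2: "space \<mu>2 = S" using sets_eq_imp_space_eq[OF s2] by (simp add: space_restrict_space)
  have sa: "sigma_algebra S ?M"
    using sets.sigma_algebra_axioms[of "restrict_space borel S"] by (simp add: space_restrict_space)
  have pos: "positive ?M ?f" by (simp add: positive_def)
  have ca: "countably_additive ?M ?f"
    unfolding countably_additive_def
  proof (intro allI impI)
    fix A :: "nat \<Rightarrow> _" assume A: "range A \<subseteq> ?M" "disjoint_family A" "(\<Union>i. A i) \<in> ?M"
    have c1: "(\<Sum>i. emeasure \<mu>1 (A i)) = emeasure \<mu>1 (\<Union>i. A i)"
      using A s1 by (intro suminf_emeasure) auto
    have c2: "(\<Sum>i. emeasure \<mu>2 (A i)) = emeasure \<mu>2 (\<Union>i. A i)"
      using A s2 by (intro suminf_emeasure) auto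
    show "(\<Sum>i. ?f (A i)) = ?f (\<Union>i. A i)"
      by (simp add: suminf_add[symmetric] c1 c2)
  qed
  have em: "\<And>A. A \<in> ?M \<Longrightarrow> emeasure (mix_measure S t \<mu>1 \<mu>2) A = ?f A"
    unfolding mix_measure_def by (rule emeasure_measure_of_sigma[OF sa pos ca])
  then show "\<And>A. A \<in> ?M \<Longrightarrow> emeasure (mix_measure S t \<mu>1 \<mu>2) A = ?f A" .
  have ss: "sets (mix_measure S t \<mu>1 \<mu>2) = ?M"
    unfolding mix_measure_def using sa by (simp add: sigma_algebra.sets_measure_of_eq)
  have spm: "space (mix_measure S t \<mu>1 \<mu>2) = S"
    unfolding mix_measure_def using sa by (simp add: sigma_algebra.space_measure_of_eq)
  have "S \<in> ?M" using sets.top[of "restrict_space borel S"] by (simp add: space_restrict_space)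
  have "emeasure (mix_measure S t \<mu>1 \<mu>2) (space (mix_measure S t \<mu>1 \<mu>2)) = 1"
  proof -
    have "emeasure \<mu>1 S = 1" "emeasure \<mu>2 S = 1"
      using p1 p2 sp1 sp2 prob_space.emeasure_space_1 by metis+
    then show ?thesis using em[OF \<open>S \<in> ?M\<close>] spm t
      by (simp add: ennreal_plus[symmetric] del: ennreal_plus)
  qed
  then show "mix_measure S t \<mu>1 \<mu>2 \<in> borel_probs S"
    using ss by (auto simp: borel_probs_def intro: prob_spaceI)
  show "measure (mix_measure S t \<mu>1 \<mu>2) A = t * measure \<mu>1 A + (1 - t) * measure \<mu>2 A" for A
  proof (cases "A \<in> ?M")
    case True
    then show ?thesis
    proof -
      have e1: "emeasure \<mu>1 A = ennreal (measure \<mu>1 A)" "emeasure \<mu>2 A = ennreal (measure \<mu>2 A)"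
        using p1 p2 by (simp_all add: finite_measure.emeasure_eq_measure prob_space_def)
      have "emeasure (mix_measure S t \<mu>1 \<mu>2) A = ennreal (t * measure \<mu>1 A + (1 - t) * measure \<mu>2 A)"
        using em[OF True] t unfolding e1 by (simp add: ennreal_mult[symmetric] ennreal_plus[symmetric] del: ennreal_plus)
      moreover have "0 \<le> t * measure \<mu>1 A + (1 - t) * measure \<mu>2 A" using t by simp
      ultimately show ?thesis unfolding measure_def[of "mix_measure S t \<mu>1 \<mu>2"] by (simp only: enn2real_ennreal)
    qed
  next
    case False
    then show ?thesis using s1 s2 ss by (simp add: measure_notin_sets)
  qed
qed


lemma sets_rb_measure_of:
  fixes S :: "'a::topological_space set"
  shows "sets (measure_of S (sets (restrict_space borel S)) f) = sets (restrict_space borel S)"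
proof -
  have sa: "sigma_algebra S (sets (restrict_space borel S))"
    using sets.sigma_algebra_axioms[of "restrict_space borel S"] by (simp add: space_restrict_space)
  then show ?thesis by (simp add: sigma_algebra.sets_measure_of_eq)
qed

lemma proj_meas:
  fixes S :: "'a::topological_space set"
  assumes "sets \<sigma> = sets (restrict_space borel (S \<times> S))"
  shows "fst \<in> \<sigma> \<rightarrow>\<^sub>M restrict_space borel S" "snd \<in> \<sigma> \<rightarrow>\<^sub>M restrict_space borel S"
proof -
  have "fst \<in> restrict_space borel (S \<times> S) \<rightarrow>\<^sub>M restrict_space borel S"
    by (rule measurable_restrict_space3) (auto intro!: borel_measurable_continuous_onI continuous_intros)
  then show "fst \<in> \<sigma> \<rightarrow>\<^sub>M restrict_space borel S" using measurable_cong_sets[OF assms, of "restrict_space borel S" "restrict_space borel S"] by simp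
  have "snd \<in> restrict_space borel (S \<times> S) \<rightarrow>\<^sub>M restrict_space borel S"
    by (rule measurable_restrict_space3) (auto intro!: borel_measurable_continuous_onI continuous_intros)
  then show "snd \<in> \<sigma> \<rightarrow>\<^sub>M restrict_space borel S" using measurable_cong_sets[OF assms, of "restrict_space borel S" "restrict_space borel S"] by simp
qed

lemma winf_mix:
  fixes S :: "'a::topological_space set"
  assumes Q1: "Q1 \<in> borel_probs S" and Q2: "Q2 \<in> borel_probs S"
    and sP: "sets P = sets (restrict_space borel S)" and l: "0 \<le> l" "l \<le> 1"
    and W1: "W_inf S D Q1 P \<le> ereal r" and W2: "W_inf S D Q2 P \<le> ereal r"
  shows "W_inf S D (mix_measure S l Q1 Q2) P \<le> ereal r"
proof (rule ereal_le_epsilon2)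
  fix e :: real assume e: "0 < e"
  let ?f = "\<lambda>z. ereal (D (fst z) (snd z))"
  let ?N = "restrict_space borel S"
  have "W_inf S D Q1 P < ereal (r + e)" using W1 e by (simp add: le_less_trans)
  then obtain \<pi>1 where p1: "\<pi>1 \<in> couplings S Q1 P" and e1: "esssup \<pi>1 ?f < ereal (r + e)"
    unfolding W_inf_def by (auto simp: INF_less_iff)
  have "W_inf S D Q2 P < ereal (r + e)" using W2 e by (simp add: le_less_trans)
  then obtain \<pi>2 where p2: "\<pi>2 \<in> couplings S Q2 P" and e2: "esssup \<pi>2 ?f < ereal (r + e)"
    unfolding W_inf_def by (auto simp: INF_less_iff)
  define \<pi> where "\<pi> = mix_measure (S \<times> S) l \<pi>1 \<pi>2"
  have b1: "\<pi>1 \<in> borel_probs (S \<times> S)" and b2: "\<pi>2 \<in> borel_probs (S \<times> S)"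
    using p1 p2 by (auto simp: couplings_def)
  have bp: "\<pi> \<in> borel_probs (S \<times> S)" unfolding \<pi>_def by (rule mix_props(1)[OF b1 b2 l])
  have s1: "sets \<pi>1 = sets (restrict_space borel (S \<times> S))" and s2: "sets \<pi>2 = sets (restrict_space borel (S \<times> S))"
    and s: "sets \<pi> = sets (restrict_space borel (S \<times> S))"
    using b1 b2 bp by (auto simp: borel_probs_def)
  have sp1: "space \<pi>1 = space \<pi>" and sp2: "space \<pi>2 = space \<pi>"
    using sets_eq_imp_space_eq s1 s2 s by metis+
  have em: "emeasure \<pi> B = ennreal l * emeasure \<pi>1 B + ennreal (1 - l) * emeasure \<pi>2 B"
    if "B \<in> sets \<pi>" for B
    unfolding \<pi>_def using mix_props(2)[OF b1 b2 l] that s by simp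
  have d1: "distr \<pi>1 ?N fst = Q1" "distr \<pi>1 ?N snd = P" and d2: "distr \<pi>2 ?N fst = Q2" "distr \<pi>2 ?N snd = P"
    using p1 p2 by (auto simp: couplings_def)
  have dfst: "distr \<pi> ?N fst = mix_measure S l Q1 Q2"
  proof (rule measure_eqI)
    have "mix_measure S l Q1 Q2 \<in> borel_probs S" by (rule mix_props(1)[OF Q1 Q2 l])
    then show "sets (distr \<pi> ?N fst) = sets (mix_measure S l Q1 Q2)" by (simp add: borel_probs_def)
    fix A assume "A \<in> sets (distr \<pi> ?N fst)"
    then have A: "A \<in> sets ?N" by simp
    have m: "fst \<in> \<pi> \<rightarrow>\<^sub>M ?N" "fst \<in> \<pi>1 \<rightarrow>\<^sub>M ?N" "fst \<in> \<pi>2 \<rightarrow>\<^sub>M ?N"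
      using proj_meas s s1 s2 by blast+
    have B: "fst -` A \<inter> space \<pi> \<in> sets \<pi>" using m(1) A by (rule measurable_sets)
    have "emeasure (distr \<pi> ?N fst) A = emeasure \<pi> (fst -` A \<inter> space \<pi>)"
      using m(1) A by (rule emeasure_distr)
    also have "\<dots> = ennreal l * emeasure \<pi>1 (fst -` A \<inter> space \<pi>1) + ennreal (1 - l) * emeasure \<pi>2 (fst -` A \<inter> space \<pi>2)"
      using em[OF B] sp1 sp2 by simp
    also have "\<dots> = ennreal l * emeasure Q1 A + ennreal (1 - l) * emeasure Q2 A"
      using emeasure_distr[OF m(2) A] emeasure_distr[OF m(3) A] d1 d2 by simp
    also have "\<dots> = emeasure (mix_measure S l Q1 Q2) A"
      using mix_props(2)[OF Q1 Q2 l A] by simp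
    finally show "emeasure (distr \<pi> ?N fst) A = emeasure (mix_measure S l Q1 Q2) A" .
  qed
  have dsnd: "distr \<pi> ?N snd = P"
  proof (rule measure_eqI)
    show "sets (distr \<pi> ?N snd) = sets P" using sP by simp
    fix A assume "A \<in> sets (distr \<pi> ?N snd)"
    then have A: "A \<in> sets ?N" by simp
    have m: "snd \<in> \<pi> \<rightarrow>\<^sub>M ?N" "snd \<in> \<pi>1 \<rightarrow>\<^sub>M ?N" "snd \<in> \<pi>2 \<rightarrow>\<^sub>M ?N"
      using proj_meas s s1 s2 by blast+
    have B: "snd -` A \<inter> space \<pi> \<in> sets \<pi>" using m(1) A by (rule measurable_sets)
    have "emeasure (distr \<pi> ?N snd) A = emeasure \<pi> (snd -` A \<inter> space \<pi>)"
      using m(1) A by (rule emeasure_distr)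
    also have "\<dots> = ennreal l * emeasure \<pi>1 (snd -` A \<inter> space \<pi>1) + ennreal (1 - l) * emeasure \<pi>2 (snd -` A \<inter> space \<pi>2)"
      using em[OF B] sp1 sp2 by simp
    also have "\<dots> = ennreal l * emeasure P A + ennreal (1 - l) * emeasure P A"
      using emeasure_distr[OF m(2) A] emeasure_distr[OF m(3) A] d1 d2 by simp
    also have "\<dots> = emeasure P A"
      using l by (simp add: distrib_right[symmetric] ennreal_plus[symmetric] del: ennreal_plus)
    finally show "emeasure (distr \<pi> ?N snd) A = emeasure P A" .
  qed
  have cp: "\<pi> \<in> couplings S (mix_measure S l Q1 Q2) P"
    using bp dfst dsnd by (simp add: couplings_def)
  have fm1: "?f \<in> borel_measurable \<pi>1"
  proof (rule ccontr)
    assume "?f \<notin> borel_measurable \<pi>1"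
    then have "esssup \<pi>1 ?f = \<top>" by (simp add: esssup_def)
    then show False using e1 by simp
  qed
  have fm: "?f \<in> borel_measurable \<pi>" using fm1 measurable_cong_sets[OF s1[folded s], of borel borel] by metis
  have ae1: "AE z in \<pi>1. ?f z \<le> ereal (r + e)"
    using esssup_AE[of ?f \<pi>1] e1 by (elim eventually_mono) (meson le_less_trans less_imp_le)
  have ae2: "AE z in \<pi>2. ?f z \<le> ereal (r + e)"
    using esssup_AE[of ?f \<pi>2] e2 by (elim eventually_mono) (meson le_less_trans less_imp_le)
  have "AE z in \<pi>. ?f z \<le> ereal (r + e)"
  proof -
    obtain N1 where N1: "{x \<in> space \<pi>1. \<not> ?f x \<le> ereal (r + e)} \<subseteq> N1" "emeasure \<pi>1 N1 = 0" "N1 \<in> sets \<pi>1"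
      using ae1 by (auto elim!: AE_E)
    obtain N2 where N2: "{x \<in> space \<pi>2. \<not> ?f x \<le> ereal (r + e)} \<subseteq> N2" "emeasure \<pi>2 N2 = 0" "N2 \<in> sets \<pi>2"
      using ae2 by (auto elim!: AE_E)
    let ?B = "{x \<in> space \<pi>. \<not> ?f x \<le> ereal (r + e)}"
    have B: "?B \<in> sets \<pi>" using fm by measurable
    have B1: "?B \<in> sets \<pi>1" "?B \<in> sets \<pi>2" using B s s1 s2 by auto
    have "emeasure \<pi>1 ?B \<le> emeasure \<pi>1 N1" using N1 sp1 by (intro emeasure_mono) auto
    then have z1: "emeasure \<pi>1 ?B = 0" using N1 by simp
    have "emeasure \<pi>2 ?B \<le> emeasure \<pi>2 N2" using N2 sp2 by (intro emeasure_mono) auto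
    then have z2: "emeasure \<pi>2 ?B = 0" using N2 by simp
    have "?B \<in> null_sets \<pi>" using em[OF B] z1 z2 B by (simp add: null_sets_def)
    moreover have "?B \<subseteq> ?B" by simp
    ultimately show ?thesis by (rule AE_I')
  qed
  then have "esssup \<pi> ?f \<le> ereal (r + e)" by (rule esssup_I[OF fm])
  moreover have "W_inf S D (mix_measure S l Q1 Q2) P \<le> esssup \<pi> ?f"
    unfolding W_inf_def using cp by (rule INF_lower)
  ultimately show "W_inf S D (mix_measure S l Q1 Q2) P \<le> ereal r + ereal e" by simp
qed


theorem lemma5:
  fixes X :: "'a::euclidean_space set" and Y :: "'b::euclidean_space set"
    and DX :: "'a \<Rightarrow> 'a \<Rightarrow> real" and DY :: "'b \<Rightarrow> 'b \<Rightarrow> real"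
    and N :: nat and d :: "nat \<Rightarrow> 'a \<times> 'b"
    and \<rho> \<gamma> :: real and x0 :: 'a
  assumes "cont_metric_on X DX" and "cont_metric_on Y DY"
    and "N \<ge> 1" and "\<forall>i<N. d i \<in> X \<times> Y"
    and "\<rho> \<ge> 0" and "x0 \<in> X" and "\<gamma> \<ge> 0"
  shows "convex_measure_set Y (cond_ambiguity X Y DX x0 \<gamma> (Winf_ball X Y DX DY N d \<rho>))"
  unfolding convex_measure_set_def
proof (intro ballI allI impI)
  fix \<mu>1 \<mu>2 and t :: real
  let ?Nn = "nbhd X DX \<gamma> x0"
  let ?B = "Winf_ball X Y DX DY N d \<rho>"
  let ?P = "empirical (X \<times> Y) N d"
  assume m1: "\<mu>1 \<in> cond_ambiguity X Y DX x0 \<gamma> ?B" and m2: "\<mu>2 \<in> cond_ambiguity X Y DX x0 \<gamma> ?B"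
    and t: "0 \<le> t \<and> t \<le> 1"
  obtain Q1 where bm1: "\<mu>1 \<in> borel_probs Y" and Q1: "Q1 \<in> ?B" and a: "measure Q1 (?Nn \<times> Y) > 0"
    and h1: "\<forall>A \<in> sets (restrict_space borel Y). measure Q1 (?Nn \<times> A) = measure \<mu>1 A * measure Q1 (?Nn \<times> Y)"
    using m1 unfolding cond_ambiguity_def by blast
  obtain Q2 where bm2: "\<mu>2 \<in> borel_probs Y" and Q2: "Q2 \<in> ?B" and b: "measure Q2 (?Nn \<times> Y) > 0"
    and h2: "\<forall>A \<in> sets (restrict_space borel Y). measure Q2 (?Nn \<times> A) = measure \<mu>2 A * measure Q2 (?Nn \<times> Y)"
    using m2 unfolding cond_ambiguity_def by blast
  define a where "a = measure Q1 (?Nn \<times> Y)"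
  define b where "b = measure Q2 (?Nn \<times> Y)"
  have a0: "a > 0" and b0: "b > 0" using a b by (simp_all add: a_def b_def)
  define den where "den = t * b + (1 - t) * a"
  have den: "den > 0"
  proof (cases "t = 0")
    case True then show ?thesis using a0 by (simp add: den_def)
  next
    case False then have "t * b > 0" using t b0 by simp
    moreover have "(1 - t) * a \<ge> 0" using t a0 by simp
    ultimately show ?thesis by (simp add: den_def)
  qed
  define l where "l = t * b / den"
  define c where "c = a * b / den"
  have l0: "0 \<le> l" unfolding l_def using t b0 den by simp
  have l1: "l \<le> 1" unfolding l_def using t a0 den by (simp add: den_def field_simps)
  have la: "l * a = t * c" unfolding l_def c_def using den by (simp add: field_simps)
  have lb: "(1 - l) * b = (1 - t) * c" unfolding l_def c_def using den by (simp add: den_def field_simps)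
  have c0: "c > 0" unfolding c_def using a0 b0 den by simp
  have bQ1: "Q1 \<in> borel_probs (X \<times> Y)" and bQ2: "Q2 \<in> borel_probs (X \<times> Y)"
    using Q1 Q2 by (auto simp: Winf_ball_def)
  define Q where "Q = mix_measure (X \<times> Y) l Q1 Q2"
  have bQ: "Q \<in> borel_probs (X \<times> Y)" unfolding Q_def by (rule mix_props(1)[OF bQ1 bQ2 l0 l1])
  have sP: "sets ?P = sets (restrict_space borel (X \<times> Y))"
    unfolding empirical_def by (rule sets_rb_measure_of)
  have "W_inf (X \<times> Y) (sum_metric DX DY) Q ?P \<le> ereal \<rho>"
    unfolding Q_def using Q1 Q2 by (intro winf_mix[OF bQ1 bQ2 sP l0 l1]) (auto simp: Winf_ball_def)
  then have QB: "Q \<in> ?B" using bQ by (simp add: Winf_ball_def)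
  have mQ: "measure Q S = l * measure Q1 S + (1 - l) * measure Q2 S" for S
    unfolding Q_def by (rule mix_props(3)[OF bQ1 bQ2 l0 l1])
  have mY: "measure Q (?Nn \<times> Y) = c"
    using mQ[of "?Nn \<times> Y"] la lb unfolding a_def[symmetric] b_def[symmetric] by (simp add: algebra_simps)
  show "mix_measure Y t \<mu>1 \<mu>2 \<in> cond_ambiguity X Y DX x0 \<gamma> ?B"
    unfolding cond_ambiguity_def
  proof (intro CollectI conjI bexI[of _ Q] ballI)
    show "mix_measure Y t \<mu>1 \<mu>2 \<in> borel_probs Y" using mix_props(1)[OF bm1 bm2] t by simp
    show "Q \<in> ?B" by (rule QB)
    show "measure Q (?Nn \<times> Y) > 0" using mY c0 by simp
    fix A assume A: "A \<in> sets (restrict_space borel Y)"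
    have "measure Q (?Nn \<times> A) = l * (measure \<mu>1 A * a) + (1 - l) * (measure \<mu>2 A * b)"
      using mQ[of "?Nn \<times> A"] h1 h2 A unfolding a_def b_def by simp
    also have "\<dots> = (t * measure \<mu>1 A + (1 - t) * measure \<mu>2 A) * c"
    proof -
      have "l * (measure \<mu>1 A * a) + (1 - l) * (measure \<mu>2 A * b)
            = measure \<mu>1 A * (l * a) + measure \<mu>2 A * ((1 - l) * b)" by (simp only: ac_simps)
      also have "\<dots> = measure \<mu>1 A * (t * c) + measure \<mu>2 A * ((1 - t) * c)" by (simp only: la lb)
      also have "\<dots> = (t * measure \<mu>1 A + (1 - t) * measure \<mu>2 A) * c" by (simp only: ring_distribs ac_simps)
      finally show ?thesis .
    qed
    also have "\<dots> = measure (mix_measure Y t \<mu>1 \<mu>2) A * measure Q (?Nn \<times> Y)"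
      using mix_props(3)[OF bm1 bm2] t mY by simp
    finally show "measure Q (?Nn \<times> A) = measure (mix_measure Y t \<mu>1 \<mu>2) A * measure Q (?Nn \<times> Y)" .
  qed
qed

end
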